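(* Let $g$ be a completely additive arithmetic function. Then for every positive integer $n$, $$(\Lambda_{Ld}\ast g)(n)=g(n)Ld(n)-\frac12\sum_{p^\alpha\parallel n}\frac{\alpha(\alpha+1)g(p)}{p}.$$
   Context: The arithmetic logarithmic derivative is $Ld(n)=\sum_{p^\alpha\parallel n}\frac{\alpha}{p}$ (sum over primes $p\mid n$, $\alpha$ the exact exponent of $p$ in $n$). $\Lambda_{Ld}(n)=\frac1p$ if $n=p^k$ for some prime $p$ and integer $k\geq1$, and $0$ otherwise. $g$ completely additive means $g(mn)=g(m)+g(n)$ for all positive integers $m,n$. $\ast$ is Dirichlet convolution. *)

theory Defs
  imports Complex_Main "HOL-Computational_Algebra.Primes"
begin

definition Ld :: "nat \<Rightarrow> real" where
  "Ld n = (\<Sum>p\<in>prime_factors n. real (multiplicity p n) / real p)"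

definition Lambda_Ld :: "nat \<Rightarrow> real" where
  "Lambda_Ld n = (if \<exists>p k. prime p \<and> k \<ge> 1 \<and> n = p ^ k
                  then 1 / real (THE p. prime p \<and> (\<exists>k\<ge>1. n = p ^ k)) else 0)"

definition dirichlet_conv :: "(nat \<Rightarrow> real) \<Rightarrow> (nat \<Rightarrow> real) \<Rightarrow> nat \<Rightarrow> real" where
  "dirichlet_conv f g n = (\<Sum>d | d dvd n. f d * g (n div d))"

definition completely_additive :: "(nat \<Rightarrow> real) \<Rightarrow> bool" where
  "completely_additive g \<longleftrightarrow> (\<forall>m n. m > 0 \<longrightarrow> n > 0 \<longrightarrow> g (m * n) = g m + g n)"

end

theory Submission
  imports Defs
begin

lemma Lambda_pp: assumes "prime (p::nat)" "k \<ge> 1" shows "Lambda_Ld (p^k) = 1 / real p"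
proof -
  have "(THE q. prime q \<and> (\<exists>j\<ge>1. p^k = q ^ j)) = p"
  proof (rule the_equality)
    show "prime p \<and> (\<exists>j\<ge>1. p^k = p ^ j)" using assms by auto
  next
    fix q assume "prime q \<and> (\<exists>j\<ge>1. p^k = q ^ j)"
    then show "q = p" using assms prime_power_inj'(1)[of p q k] by auto
  qed
  then show ?thesis using assms unfolding Lambda_Ld_def by auto
qed

lemma gauss_real: "(\<Sum>k=1..(a::nat). real k) = real a * (real a + 1) / 2"
  by (induction a) (auto simp: algebra_simps)

lemma pow_dvd_iff: assumes "prime (p::nat)" "n > 0"
  shows "p ^ k dvd n \<longleftrightarrow> k \<le> multiplicity p n"
  using assms multiplicity_dvd' multiplicity_geI by (metis not_prime_unit neq0_conv)

theorem theorem3p2: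
  fixes g :: "nat \<Rightarrow> real" and n :: nat
  assumes "completely_additive g" and "n > 0"
  shows "dirichlet_conv Lambda_Ld g n =
           g n * Ld n - (1/2) * (\<Sum>p\<in>prime_factors n.
              real (multiplicity p n) * (real (multiplicity p n) + 1) * g p / real p)"
proof -
  have add: "\<And>a b. a > 0 \<Longrightarrow> b > 0 \<Longrightarrow> g (a*b) = g a + g b"
    using assms(1) unfolding completely_additive_def by blast
  have gpow: "g (p^k) = real k * g p" if "p > 0" for p k
  proof (induction k)
    case 0
    have "g (1*1) = g 1 + g 1" by (rule add) auto
    then show ?case by simp
  next
    case (Suc k)
    have "g (p * p^k) = g p + g (p^k)" by (rule add) (use that in auto)
    then show ?case using Suc by (simp add: algebra_simps)
  qed
  define S where "S = {d. d dvd n \<and> (\<exists>p k. prime p \<and> k \<ge> 1 \<and> d = p ^ k)}"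
  define T where "T = (SIGMA p:prime_factors n. {1..multiplicity p n})"
  have fin: "finite {d. d dvd n}" using assms(2) by simp
  have "dirichlet_conv Lambda_Ld g n = (\<Sum>d\<in>S. Lambda_Ld d * g (n div d))"
    unfolding dirichlet_conv_def
    by (rule sum.mono_neutral_right[OF fin]) (auto simp: S_def Lambda_Ld_def)
  also have "\<dots> = (\<Sum>(p,k)\<in>T. Lambda_Ld (p^k) * g (n div p^k))"
  proof -
    have "bij_betw (\<lambda>(p,k). p^k) T S"
    proof (rule bij_betwI')
      fix x y assume xy: "x \<in> T" "y \<in> T"
      obtain p k q j where e: "x = (p,k)" "y = (q,j)" by (cases x, cases y) auto
      have "prime p" "prime q" "k > 0" "j > 0" using xy e unfolding T_def by (auto simp: in_prime_factors_iff)
      then show "((case x of (p, k) \<Rightarrow> p ^ k) = (case y of (p, k) \<Rightarrow> p ^ k)) = (x = y)"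
        using e prime_power_inj'[of p q k j] by auto
    next
      fix x assume "x \<in> T" then show "(case x of (p, k) \<Rightarrow> p ^ k) \<in> S"
        unfolding T_def S_def using pow_dvd_iff assms(2) by (auto simp: in_prime_factors_iff) blast
    next
      fix y assume "y \<in> S"
      then obtain p k where "prime p" "k \<ge> 1" "y = p^k" "p^k dvd n" unfolding S_def by auto
      moreover have "p dvd n" using \<open>p^k dvd n\<close> \<open>k \<ge> 1\<close>
        by (meson dvd_power dvd_trans le_numeral_extra(2) less_le_trans order_trans zero_less_one dvd_power_le dvd_refl power_one_right le_imp_power_dvd)
      ultimately have "(p,k) \<in> T" "y = p^k"
        unfolding T_def using pow_dvd_iff assms(2) by (auto simp: in_prime_factors_iff)
      then show "\<exists>x\<in>T. y = (case x of (p, k) \<Rightarrow> p ^ k)" by force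
    qed
    then show ?thesis by (simp add: sum.reindex_bij_betw[symmetric] case_prod_beta)
  qed
  also have "\<dots> = (\<Sum>p\<in>prime_factors n. \<Sum>k=1..multiplicity p n. (g n - real k * g p) / real p)"
  proof -
    have "(\<Sum>(p,k)\<in>T. Lambda_Ld (p^k) * g (n div p^k)) = (\<Sum>p\<in>prime_factors n. \<Sum>k=1..multiplicity p n. Lambda_Ld (p^k) * g (n div p^k))"
      unfolding T_def by (rule sum.Sigma[symmetric]) auto
    also have "\<dots> = (\<Sum>p\<in>prime_factors n. \<Sum>k=1..multiplicity p n. (g n - real k * g p) / real p)"
    proof (intro sum.cong refl)
    fix p k assume p: "p \<in> prime_factors n" and k: "k \<in> {1..multiplicity p n}"
    have pr: "prime p" using p by (auto simp: in_prime_factors_iff)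
    have dv: "p^k dvd n" using k pow_dvd_iff[OF pr assms(2)] by auto
    have "g n = g (p^k * (n div p^k))" using dv by simp
    also have "\<dots> = g (p^k) + g (n div p^k)"
      by (rule add) (use pr dv assms(2) in \<open>auto simp: prime_gt_0_nat dvd_div_eq_0_iff\<close>)
    finally have "g (n div p^k) = g n - real k * g p" using gpow[of p k] pr prime_gt_0_nat by auto
    then show "Lambda_Ld (p^k) * g (n div p^k) = (g n - real k * g p) / real p"
      using Lambda_pp[OF pr] k by auto
  qed
  finally show ?thesis .
  qed
  also have "\<dots> = (\<Sum>p\<in>prime_factors n. g n * (real (multiplicity p n) / real p)
       - (1/2) * (real (multiplicity p n) * (real (multiplicity p n) + 1) * g p / real p))"
  proof (intro sum.cong refl)
    fix p assume "p \<in> prime_factors n"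
    have "(\<Sum>k=1..multiplicity p n. (g n - real k * g p) / real p)
        = (\<Sum>k=1..multiplicity p n. g n / real p) - (\<Sum>k=1..multiplicity p n. real k) * g p / real p"
      by (simp add: sum_subtractf sum_divide_distrib sum_distrib_right diff_divide_distrib)
    also have "\<dots> = g n * (real (multiplicity p n) / real p)
       - (1/2) * (real (multiplicity p n) * (real (multiplicity p n) + 1) * g p / real p)"
      by (subst gauss_real) (simp add: field_simps)
    finally show "(\<Sum>k=1..multiplicity p n. (g n - real k * g p) / real p) = g n * (real (multiplicity p n) / real p)
       - (1/2) * (real (multiplicity p n) * (real (multiplicity p n) + 1) * g p / real p)" .
  qed
  also have "\<dots> = g n * Ld n - (1/2) * (\<Sum>p\<in>prime_factors n.
              real (multiplicity p n) * (real (multiplicity p n) + 1) * g p / real p)"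
    by (simp add: Ld_def sum_subtractf sum_distrib_left)
  finally show ?thesis .
qed

end
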